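(* Let $\mathcal{A}$ be a unital dual Banach algebra. If $\mathcal{A}$ is Johnson pseudo-Connes amenable, then $\mathcal{A}$ is approximately Connes amenable.
   Context: A dual Banach algebra is a Banach algebra $\mathcal{A}$ together with a closed $\mathcal{A}$-submodule $\mathcal{A}_*$ of $\mathcal{A}^*$ such that $\mathcal{A}=(\mathcal{A}_* )^*$. A Banach $\mathcal{A}$-bimodule $E$ is normal dual if $E=(E_* )^*$ for a closed submodule $E_*$ of $E^*$ and the module maps $a\mapsto a\cdot x$, $a\mapsto x\cdot a$ are weak$^*$-weak$^*$ continuous. $\mathcal{A}$ is approximately Connes amenable if for every normal dual Banach $\mathcal{A}$-bimodule $E$, every weak$^*$-continuous derivation $D:\mathcal{A}\to E$ is approximately inner, i.e. there is a net $(x_\alpha)$ in $E$ with $D(a)=\lim_\alpha(a\cdot x_\alpha-x_\alpha\cdot a)$ for all $a$. For a bimodule $E$, $\sigma wc(E)$ is the set of $x\in E$ for which $a\mapsto a\cdot x$, $a\mapsto x\cdot a$ are weak$^*$-weak continuous. $\mathcal{A}\hat{\otimes}\mathcal{A}$ has actions $a\cdot(b\otimes c)=ab\otimes c$, $(b\otimes c)\cdot a=b\otimes ca$; duals carry the dual actions. $\pi_{\mathcal{A}}$ is the multiplication map $\mathcal{A}\hat{\otimes}\mathcal{A}\to\mathcal{A}$, $i_{\mathcal{A}_*}:\mathcal{A}_*\hookrightarrow\mathcal{A}^*$ the canonical embedding. $\mathcal{A}$ is Johnson pseudo-Connes amenable if there is a (not necessarily bounded) net $(m_\alpha)$ in $(\mathcal{A}\hat{\otimes}\mathcal{A})^{**}$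 with $\langle T,a\cdot m_\alpha\rangle=\langle T,m_\alpha\cdot a\rangle$ for all $a\in\mathcal{A}$, $T\in\sigma wc((\mathcal{A}\hat{\otimes}\mathcal{A})^* )$, $\alpha$, and $i_{\mathcal{A}_*}^*\pi_{\mathcal{A}}^{**}(m_\alpha)a\to a$ for every $a\in\mathcal{A}$. *)

theory Defs
  imports "HOL-Analysis.Analysis"
begin

(* All Banach spaces are over the reals (the library's bounded linear
  functions are real-linear).  Duals are X =>L real. *)

definition initial_top :: "('x \<Rightarrow> real) set \<Rightarrow> 'x topology" where
  "initial_top \<Phi> = topology_generated_by {\<phi> -` U | \<phi> U. \<phi> \<in> \<Phi> \<and> open U}"

definition wstar_top :: "('x::real_normed_vector \<Rightarrow>\<^sub>L real) set \<Rightarrow> 'x topology" where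
  "wstar_top Q = initial_top (blinfun_apply ` Q)"

definition weak_top :: "'x::real_normed_vector topology" where
  "weak_top = initial_top (range (blinfun_apply :: ('x \<Rightarrow>\<^sub>L real) \<Rightarrow> 'x \<Rightarrow> real))"

(* Q is a closed subspace of X^d and X = Q^d isometrically via the
  canonical map x \<mapsto> (\<phi> \<mapsto> \<phi> x). *)
definition is_predual :: "('x::real_normed_vector \<Rightarrow>\<^sub>L real) set \<Rightarrow> bool" where
  "is_predual Q \<longleftrightarrow> subspace Q \<and> closed Q \<and>
     (\<forall>g :: ('x \<Rightarrow>\<^sub>L real) \<Rightarrow> real.
        ((\<forall>\<phi>\<in>Q. \<forall>\<psi>\<in>Q. g (\<phi> + \<psi>) = g \<phi> + g \<psi>) \<and> (\<forall>\<phi>\<in>Q. \<forall>c. g (c *\<^sub>R \<phi>) = c * g \<phi>) \<and>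
         (\<exists>K. \<forall>\<phi>\<in>Q. \<bar>g \<phi>\<bar> \<le> K * norm \<phi>))
        \<longrightarrow> (\<exists>!x. \<forall>\<phi>\<in>Q. g \<phi> = blinfun_apply \<phi> x)) \<and>
     (\<forall>x. norm x = Sup {\<bar>blinfun_apply \<phi> x\<bar> | \<phi>. \<phi> \<in> Q \<and> norm \<phi> \<le> 1})"

definition dual_banach_algebra :: "('a::{real_normed_algebra,banach} \<Rightarrow>\<^sub>L real) set \<Rightarrow> bool" where
  "dual_banach_algebra P \<longleftrightarrow> is_predual P \<and>
     (\<forall>\<phi>\<in>P. \<forall>a. Blinfun (\<lambda>b. blinfun_apply \<phi> (a * b)) \<in> P \<and>
                 Blinfun (\<lambda>b. blinfun_apply \<phi> (b * a)) \<in> P)"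

definition unital_algebra :: "'a::real_normed_algebra itself \<Rightarrow> bool" where
  "unital_algebra _ \<longleftrightarrow> (\<exists>e::'a. \<forall>a. e * a = a \<and> a * e = a)"

definition banach_bimodule ::
  "('a::{real_normed_algebra,banach} \<Rightarrow> 'e::banach \<Rightarrow> 'e) \<Rightarrow> ('e \<Rightarrow> 'a \<Rightarrow> 'e) \<Rightarrow> bool" where
  "banach_bimodule l r \<longleftrightarrow> bounded_bilinear l \<and> bounded_bilinear r \<and>
     (\<forall>a b x. l (a * b) x = l a (l b x)) \<and>
     (\<forall>a b x. r x (a * b) = r (r x a) b) \<and>
     (\<forall>a b x. r (l a x) b = l a (r x b))"

definition normal_dual_bimodule ::
  "('a::{real_normed_algebra,banach} \<Rightarrow>\<^sub>L real) set \<Rightarrow> ('a \<Rightarrow> 'e::banach \<Rightarrow> 'e) \<Rightarrow> ('e \<Rightarrow> 'a \<Rightarrow> 'e)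
    \<Rightarrow> ('e \<Rightarrow>\<^sub>L real) set \<Rightarrow> bool" where
  "normal_dual_bimodule P l r Q \<longleftrightarrow> banach_bimodule l r \<and> is_predual Q \<and>
     (\<forall>\<psi>\<in>Q. \<forall>a. Blinfun (\<lambda>x. blinfun_apply \<psi> (l a x)) \<in> Q \<and>
                 Blinfun (\<lambda>x. blinfun_apply \<psi> (r x a)) \<in> Q) \<and>
     (\<forall>x. continuous_map (wstar_top P) (wstar_top Q) (\<lambda>a. l a x) \<and>
          continuous_map (wstar_top P) (wstar_top Q) (\<lambda>a. r x a))"

definition wstar_derivation ::
  "('a::{real_normed_algebra,banach} \<Rightarrow>\<^sub>L real) set \<Rightarrow> ('a \<Rightarrow> 'e::banach \<Rightarrow> 'e) \<Rightarrow> ('e \<Rightarrow> 'a \<Rightarrow> 'e)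
    \<Rightarrow> ('e \<Rightarrow>\<^sub>L real) set \<Rightarrow> ('a \<Rightarrow> 'e) \<Rightarrow> bool" where
  "wstar_derivation P l r Q D \<longleftrightarrow> bounded_linear D \<and>
     (\<forall>a b. D (a * b) = l a (D b) + r (D a) b) \<and>
     continuous_map (wstar_top P) (wstar_top Q) D"

(* Approximately inner: D a = lim (a x_\<alpha> - x_\<alpha> a) in norm, for some net.
  A net in E is encoded by the (proper) filter it induces on E. *)
definition approx_inner ::
  "('a \<Rightarrow> 'e::real_normed_vector \<Rightarrow> 'e) \<Rightarrow> ('e \<Rightarrow> 'a \<Rightarrow> 'e) \<Rightarrow> ('a \<Rightarrow> 'e) \<Rightarrow> bool" where
  "approx_inner l r D \<longleftrightarrow> (\<exists>F :: 'e filter. F \<noteq> bot \<and>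
     (\<forall>a. ((\<lambda>x. l a x - r x a) \<longlongrightarrow> D a) F))"

(* Approximate Connes amenability, tested against all normal dual bimodules
  whose underlying Banach space is the type 'e. *)
definition approx_connes_amenable_on ::
  "('a::{real_normed_algebra,banach} \<Rightarrow>\<^sub>L real) set \<Rightarrow> 'e::banach itself \<Rightarrow> bool" where
  "approx_connes_amenable_on P _ \<longleftrightarrow>
     (\<forall>(l :: 'a \<Rightarrow> 'e \<Rightarrow> 'e) r Q D.
        normal_dual_bimodule P l r Q \<and> wstar_derivation P l r Q D \<longrightarrow> approx_inner l r D)"

(* (A \<otimes>^ A)^d is identified with bounded bilinear forms A \<times> A \<rightarrow> R,
  i.e. with A =>L (A =>L real), where T b c = <T, b \<otimes> c>.
  Hence (A \<otimes>^ A)^dd = (A =>L A =>L real) =>L real. *)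

(* Dual right action: <T\<cdot>a, b\<otimes>c> = <T, ab\<otimes>c>. *)
definition tdual_ract :: "('a::{real_normed_algebra,banach} \<Rightarrow>\<^sub>L 'a \<Rightarrow>\<^sub>L real) \<Rightarrow> 'a \<Rightarrow> ('a \<Rightarrow>\<^sub>L 'a \<Rightarrow>\<^sub>L real)" where
  "tdual_ract T a = Blinfun (\<lambda>b. blinfun_apply T (a * b))"

(* Dual left action: <a\<cdot>T, b\<otimes>c> = <T, b\<otimes>ca>. *)
definition tdual_lact :: "'a::{real_normed_algebra,banach} \<Rightarrow> ('a \<Rightarrow>\<^sub>L 'a \<Rightarrow>\<^sub>L real) \<Rightarrow> ('a \<Rightarrow>\<^sub>L 'a \<Rightarrow>\<^sub>L real)" where
  "tdual_lact a T = Blinfun (\<lambda>b. Blinfun (\<lambda>c. blinfun_apply (blinfun_apply T b) (c * a)))"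

definition sigma_wc :: "('a::{real_normed_algebra,banach} \<Rightarrow>\<^sub>L real) set \<Rightarrow> ('a \<Rightarrow>\<^sub>L 'a \<Rightarrow>\<^sub>L real) set" where
  "sigma_wc P = {T. continuous_map (wstar_top P) weak_top (\<lambda>a. tdual_lact a T) \<and>
                    continuous_map (wstar_top P) weak_top (\<lambda>a. tdual_ract T a)}"

definition pi_star :: "('a::{real_normed_algebra,banach} \<Rightarrow>\<^sub>L real) \<Rightarrow> ('a \<Rightarrow>\<^sub>L 'a \<Rightarrow>\<^sub>L real)" where
  "pi_star \<phi> = Blinfun (\<lambda>b. Blinfun (\<lambda>c. blinfun_apply \<phi> (b * c)))"

(* i_{A_pre}^d \<pi>^dd (m), as an element of A = (A_pre)^d: the u with
  \<phi>(u) = <\<pi>^dd m, i(\<phi>)> = m(\<pi>^d \<phi>) for all \<phi> in A_pre. *)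
definition diag_elem :: "('a::{real_normed_algebra,banach} \<Rightarrow>\<^sub>L real) set
    \<Rightarrow> (('a \<Rightarrow>\<^sub>L 'a \<Rightarrow>\<^sub>L real) \<Rightarrow>\<^sub>L real) \<Rightarrow> 'a" where
  "diag_elem P m = (THE u. \<forall>\<phi>\<in>P. blinfun_apply \<phi> u = blinfun_apply m (pi_star \<phi>))"

(* Johnson pseudo-Connes amenability; the (possibly unbounded) net (m_\<alpha>)
  is encoded by the proper filter it induces on (A \<otimes>^ A)^dd. *)
definition johnson_pseudo_connes_amenable :: "('a::{real_normed_algebra,banach} \<Rightarrow>\<^sub>L real) set \<Rightarrow> bool" where
  "johnson_pseudo_connes_amenable P \<longleftrightarrow>
     (\<exists>F :: (('a \<Rightarrow>\<^sub>L 'a \<Rightarrow>\<^sub>L real) \<Rightarrow>\<^sub>L real) filter. F \<noteq> bot \<and>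
        (\<forall>\<^sub>F m in F. \<forall>a. \<forall>T\<in>sigma_wc P.
            blinfun_apply m (tdual_ract T a) = blinfun_apply m (tdual_lact a T)) \<and>
        (\<forall>a. ((\<lambda>m. diag_elem P m * a) \<longlongrightarrow> a) F))"

end

theory Submission
  imports Defs
begin

lemma bb_post:
  assumes "bounded_linear h" "bounded_bilinear F"
  shows "bounded_bilinear (\<lambda>x y. h (F x y))"
proof -
  interpret h: bounded_linear h by fact
  interpret F: bounded_bilinear F by fact
  obtain K where K: "\<And>x. norm (h x) \<le> norm x * K" "K \<ge> 0" using h.nonneg_bounded by blast
  obtain L where L: "\<And>a b. norm (F a b) \<le> norm a * norm b * L" "L \<ge> 0" using F.nonneg_bounded by blast
  show ?thesis
  proof
    show "\<exists>M. \<forall>a b. norm (h (F a b)) \<le> norm a * norm b * M"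
    proof (intro exI allI)
      fix a b
      have "norm (h (F a b)) \<le> norm (F a b) * K" by (rule K)
      also have "\<dots> \<le> (norm a * norm b * L) * K" by (rule mult_right_mono[OF L(1) K(2)])
      finally show "norm (h (F a b)) \<le> norm a * norm b * (L * K)" by (simp add: ac_simps)
    qed
  qed (simp_all add: F.add_left F.add_right F.scaleR_left F.scaleR_right h.add h.scaleR)
qed

lemma curry_bl:
  assumes "bounded_bilinear F"
  shows "bounded_linear (\<lambda>b. Blinfun (F b))"
    and "blinfun_apply (blinfun_apply (Blinfun (\<lambda>b. Blinfun (F b))) b) c = F b c"
proof -
  have 1: "\<And>b. blinfun_apply (Blinfun (F b)) = F b"
    by (rule bounded_linear_Blinfun_apply[OF bounded_bilinear.bounded_linear_right[OF assms]])
  have "bounded_bilinear F = bounded_linear (\<lambda>b. Blinfun (F b))"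
    by (rule transfer_bounded_bilinear_bounded_linearI) (simp add: 1)
  then show 2: "bounded_linear (\<lambda>b. Blinfun (F b))" using assms by simp
  show "blinfun_apply (blinfun_apply (Blinfun (\<lambda>b. Blinfun (F b))) b) c = F b c"
    by (simp add: bounded_linear_Blinfun_apply[OF 2] 1)
qed

lemma curry_bl3:
  assumes "bounded_bilinear F"
  shows "bounded_linear (\<lambda>\<psi>::'c::real_normed_vector \<Rightarrow>\<^sub>L real. Blinfun (\<lambda>b. Blinfun (\<lambda>c. blinfun_apply \<psi> (F b c))))"
    and "blinfun_apply (blinfun_apply (Blinfun (\<lambda>b. Blinfun (\<lambda>c. blinfun_apply \<psi> (F b c)))) b) c = blinfun_apply \<psi> (F b c)"
proof -
  show "blinfun_apply (blinfun_apply (Blinfun (\<lambda>b. Blinfun (\<lambda>c. blinfun_apply \<psi> (F b c)))) b) c = blinfun_apply \<psi> (F b c)"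
    by (rule curry_bl(2)[OF bb_post[OF blinfun.bounded_linear_right assms]])
  define G where "G = (\<lambda>b. Blinfun (F b))"
  have G: "bounded_linear G" unfolding G_def by (rule curry_bl(1)[OF assms])
  have Gap: "\<And>b. blinfun_apply (G b) = F b"
    unfolding G_def by (rule bounded_linear_Blinfun_apply[OF bounded_bilinear.bounded_linear_right[OF assms]])
  have eq: "(\<lambda>\<psi>::'c \<Rightarrow>\<^sub>L real. Blinfun (\<lambda>b. Blinfun (\<lambda>c. blinfun_apply \<psi> (F b c)))) = (\<lambda>\<psi>. Blinfun (\<lambda>b. \<psi> o\<^sub>L G b))"
  proof -
    have "Blinfun (\<lambda>c. blinfun_apply \<psi> (F b c)) = \<psi> o\<^sub>L G b" for \<psi> :: "'c \<Rightarrow>\<^sub>L real" and b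
    proof -
      have "bounded_linear (\<lambda>c. blinfun_apply \<psi> (F b c))"
        by (rule bounded_bilinear.bounded_linear_right[OF bb_post[OF blinfun.bounded_linear_right assms]])
      note bl = bounded_linear_Blinfun_apply[OF this]
      show ?thesis
        by (rule blinfun_eqI) (simp add: bl Gap)
    qed
    then show ?thesis by simp
  qed
  have bb: "bounded_bilinear (\<lambda>\<psi> b. \<psi> o\<^sub>L G b)"
    by (rule bounded_bilinear.comp[OF bounded_bilinear_blinfun_compose bounded_linear_ident G])
  have "bounded_linear (\<lambda>\<psi>::'c \<Rightarrow>\<^sub>L real. Blinfun (\<lambda>b. \<psi> o\<^sub>L G b))"
    by (rule curry_bl(1)[OF bb])
  then show "bounded_linear (\<lambda>\<psi>::'c::real_normed_vector \<Rightarrow>\<^sub>L real. Blinfun (\<lambda>b. Blinfun (\<lambda>c. blinfun_apply \<psi> (F b c))))"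
    by (simp only: eq)
qed


lemma initial_top_topspace:
  assumes "\<Phi> \<noteq> {}"
  shows "topspace (initial_top \<Phi>) = UNIV"
proof -
  obtain \<phi> where "\<phi> \<in> \<Phi>" using assms by blast
  moreover have "\<phi> -` UNIV = UNIV" by simp
  ultimately have "UNIV \<in> {\<phi> -` U | \<phi> U. \<phi> \<in> \<Phi> \<and> open U}" by (metis (mono_tags, lifting) open_UNIV mem_Collect_eq)
  then show ?thesis unfolding initial_top_def topology_generated_by_topspace by blast
qed

lemma initial_top_cont:
  assumes "\<Phi> \<noteq> {}" "\<phi> \<in> \<Phi>"
  shows "continuous_map (initial_top \<Phi>) euclidean \<phi>"
  unfolding continuous_map_def
proof (intro conjI allI impI)
  show "\<phi> \<in> topspace (initial_top \<Phi>) \<rightarrow> topspace euclidean" by simp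
  fix U :: "real set" assume "openin euclidean U"
  then have "open U" by simp
  then have "\<phi> -` U \<in> {\<phi> -` U | \<phi> U. \<phi> \<in> \<Phi> \<and> open U}" using assms by blast
  then have "openin (initial_top \<Phi>) (\<phi> -` U)"
    unfolding initial_top_def by (rule topology_generated_by_Basis)
  moreover have "{x \<in> topspace (initial_top \<Phi>). \<phi> x \<in> U} = \<phi> -` U"
    using initial_top_topspace[OF assms(1)] by auto
  ultimately show "openin (initial_top \<Phi>) {x \<in> topspace (initial_top \<Phi>). \<phi> x \<in> U}" by simp
qed

lemma into_initial_top:
  assumes "\<Phi> \<noteq> {}" "\<And>\<phi>. \<phi> \<in> \<Phi> \<Longrightarrow> continuous_map X euclidean (\<lambda>x. \<phi> (g x))"
  shows "continuous_map X (initial_top \<Phi>) g"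
  unfolding initial_top_def
proof (rule continuous_on_generated_topo)
  fix U assume "U \<in> {\<phi> -` U | \<phi> U. \<phi> \<in> \<Phi> \<and> open U}"
  then obtain \<phi> V where U: "U = \<phi> -` V" "\<phi> \<in> \<Phi>" "open V" by blast
  have "openin X {x \<in> topspace X. \<phi> (g x) \<in> V}"
    using assms(2)[OF U(2)] U(3) unfolding continuous_map_def by simp
  moreover have "{x \<in> topspace X. \<phi> (g x) \<in> V} = g -` U \<inter> topspace X" using U by auto
  ultimately show "openin X (g -` U \<inter> topspace X)" by simp
next
  have "topspace (initial_top \<Phi>) = UNIV" by (rule initial_top_topspace[OF assms(1)])
  then show "g ` topspace X \<subseteq> \<Union> {\<phi> -` U | \<phi> U. \<phi> \<in> \<Phi> \<and> open U}"
    unfolding initial_top_def topology_generated_by_topspace by simp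
qed

lemma gen_nbhd:
  fixes P :: "('x::real_normed_vector \<Rightarrow>\<^sub>L real) set"
  assumes "generate_topology_on {\<phi> -` U | \<phi> U. \<phi> \<in> blinfun_apply ` P \<and> open U} W" "x \<in> W"
  shows "\<exists>M e. finite M \<and> M \<subseteq> P \<and> e > 0 \<and>
           {y. \<forall>p\<in>M. \<bar>blinfun_apply p y - blinfun_apply p x\<bar> < e} \<subseteq> W"
  using assms
proof (induction arbitrary: x rule: generate_topology_on.induct)
  case Empty then show ?case by simp
next
  case (Int a b)
  have xa: "x \<in> a" "x \<in> b" using Int.prems by auto
  obtain M1 e1 where 1: "finite M1" "M1 \<subseteq> P" "e1 > 0"
      "{y. \<forall>p\<in>M1. \<bar>blinfun_apply p y - blinfun_apply p x\<bar> < e1} \<subseteq> a"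
    using Int.IH(1)[OF xa(1)] by blast
  obtain M2 e2 where 2: "finite M2" "M2 \<subseteq> P" "e2 > 0"
      "{y. \<forall>p\<in>M2. \<bar>blinfun_apply p y - blinfun_apply p x\<bar> < e2} \<subseteq> b"
    using Int.IH(2)[OF xa(2)] by blast
  have "{y. \<forall>p\<in>M1 \<union> M2. \<bar>blinfun_apply p y - blinfun_apply p x\<bar> < min e1 e2} \<subseteq> a \<inter> b"
  proof
    fix y assume "y \<in> {y. \<forall>p\<in>M1 \<union> M2. \<bar>blinfun_apply p y - blinfun_apply p x\<bar> < min e1 e2}"
    then have hy: "\<And>p. p \<in> M1 \<union> M2 \<Longrightarrow> \<bar>blinfun_apply p y - blinfun_apply p x\<bar> < min e1 e2" by blast
    have "\<forall>p\<in>M1. \<bar>blinfun_apply p y - blinfun_apply p x\<bar> < e1"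
    proof
      fix p assume "p \<in> M1"
      then have "\<bar>blinfun_apply p y - blinfun_apply p x\<bar> < min e1 e2" using hy by blast
      then show "\<bar>blinfun_apply p y - blinfun_apply p x\<bar> < e1" by linarith
    qed
    moreover have "\<forall>p\<in>M2. \<bar>blinfun_apply p y - blinfun_apply p x\<bar> < e2"
    proof
      fix p assume "p \<in> M2"
      then have "\<bar>blinfun_apply p y - blinfun_apply p x\<bar> < min e1 e2" using hy by blast
      then show "\<bar>blinfun_apply p y - blinfun_apply p x\<bar> < e2" by linarith
    qed
    ultimately show "y \<in> a \<inter> b" using 1(4) 2(4) by blast
  qed
  moreover have "finite (M1 \<union> M2)" "M1 \<union> M2 \<subseteq> P" "min e1 e2 > 0" using 1 2 by auto
  ultimately show ?case by blast
next
  case (UN K)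
  then obtain k where k: "k \<in> K" "x \<in> k" by blast
  have "k \<subseteq> \<Union>K" using k by blast
  with UN.IH[OF k] show ?case by blast
next
  case (Basis s)
  then obtain p U where s: "s = blinfun_apply p -` U" "p \<in> P" "open U" by blast
  then have "blinfun_apply p x \<in> U" using Basis.prems by simp
  then obtain e where e: "e > 0" "\<And>y. dist y (blinfun_apply p x) < e \<Longrightarrow> y \<in> U"
    using s(3) unfolding open_dist by blast
  have "{y. \<forall>q\<in>{p}. \<bar>blinfun_apply q y - blinfun_apply q x\<bar> < e} \<subseteq> s"
    using e(2) s(1) by (auto simp: dist_real_def)
  moreover have "finite {p}" "{p} \<subseteq> P" using s by auto
  ultimately show ?case using e(1) by blast
qed

lemma kernel_span:
  fixes M :: "('a::real_normed_vector \<Rightarrow>\<^sub>L real) set"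
  assumes "finite M"
  shows "\<forall>S. subspace S \<longrightarrow> linear f \<longrightarrow>
    (\<forall>y\<in>S. (\<forall>p\<in>M. blinfun_apply p y = 0) \<longrightarrow> f y = 0) \<longrightarrow>
    (\<exists>c. \<forall>y\<in>S. f y = (\<Sum>p\<in>M. c p * blinfun_apply p y))"
  using assms
proof (induction M rule: finite_induct)
  case empty then show ?case by auto
next
  case (insert q M)
  show ?case
  proof (intro allI impI)
    fix S :: "'a set"
    assume S: "subspace S" and f: "linear f"
      and H: "\<forall>y\<in>S. (\<forall>p\<in>insert q M. blinfun_apply p y = 0) \<longrightarrow> f y = 0"
    define S' where "S' = {y\<in>S. blinfun_apply q y = 0}"
    have S': "subspace S'"
      unfolding S'_def subspace_def using S[unfolded subspace_def]
      by (auto simp: blinfun.add_right blinfun.scaleR_right)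
    have H': "\<forall>y\<in>S'. (\<forall>p\<in>M. blinfun_apply p y = 0) \<longrightarrow> f y = 0"
      using H unfolding S'_def by auto
    obtain c where c: "\<forall>y\<in>S'. f y = (\<Sum>p\<in>M. c p * blinfun_apply p y)"
      using insert.IH S' f H' by blast
    define g where "g y = f y - (\<Sum>p\<in>M. c p * blinfun_apply p y)" for y
    have lp: "linear (\<lambda>y. c p * blinfun_apply p y)" for p
      by (rule bounded_linear.linear[OF bounded_linear_compose[OF bounded_linear_mult_right blinfun.bounded_linear_right]])
    have glin: "linear g" unfolding g_def
      by (intro linear_compose_sub f linear_compose_sum ballI lp)
    have g0: "\<And>y. y \<in> S' \<Longrightarrow> g y = 0" using c unfolding g_def by simp
    show "\<exists>c. \<forall>y\<in>S. f y = (\<Sum>p\<in>insert q M. c p * blinfun_apply p y)"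
    proof (cases "\<exists>v\<in>S. blinfun_apply q v \<noteq> 0")
      case False
      then have "S' = S" unfolding S'_def by auto
      then show ?thesis
        using c insert.hyps by (intro exI[of _ "c(q := 0)"]) (auto intro!: sum.cong)
    next
      case True
      then obtain v where v: "v \<in> S" "blinfun_apply q v \<noteq> 0" by blast
      define c' where "c' = c(q := g v / blinfun_apply q v)"
      show ?thesis
      proof (intro exI[of _ c'] ballI)
        fix y assume y: "y \<in> S"
        define t where "t = blinfun_apply q y / blinfun_apply q v"
        have "y - t *\<^sub>R v \<in> S'" unfolding S'_def t_def using y v S
          by (auto simp: blinfun.diff_right blinfun.scaleR_right subspace_diff subspace_scale)
        then have "g (y - t *\<^sub>R v) = 0" by (rule g0)
        then have gy: "g y = t * g v"
          using linear_diff[OF glin] linear_scale[OF glin] by simp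
        have "(\<Sum>p\<in>insert q M. c' p * blinfun_apply p y) =
              c' q * blinfun_apply q y + (\<Sum>p\<in>M. c' p * blinfun_apply p y)"
          using insert.hyps by simp
        also have "(\<Sum>p\<in>M. c' p * blinfun_apply p y) = (\<Sum>p\<in>M. c p * blinfun_apply p y)"
          using insert.hyps unfolding c'_def by (intro sum.cong) auto
        also have "c' q * blinfun_apply q y = g y"
          unfolding c'_def gy t_def using v by simp
        finally show "f y = (\<Sum>p\<in>insert q M. c' p * blinfun_apply p y)"
          unfolding g_def by simp
      qed
    qed
  qed
qed


lemma predual_rep:
  assumes "is_predual Q" "bounded_linear g"
  shows "\<exists>!x. \<forall>\<phi>\<in>Q. g \<phi> = blinfun_apply \<phi> x"
proof -
  interpret g: bounded_linear g by fact
  obtain K where K: "\<And>x. norm (g x) \<le> norm x * K" using g.bounded by blast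
  have "\<exists>K. \<forall>\<phi>\<in>Q. \<bar>g \<phi>\<bar> \<le> K * norm \<phi>"
    using K by (intro exI[of _ K]) (simp add: mult.commute)
  moreover have "\<forall>\<phi>\<in>Q. \<forall>\<psi>\<in>Q. g (\<phi> + \<psi>) = g \<phi> + g \<psi>" by (simp add: g.add)
  moreover have "\<forall>\<phi>\<in>Q. \<forall>c. g (c *\<^sub>R \<phi>) = c * g \<phi>" by (simp add: g.scaleR)
  ultimately show ?thesis using assms(1) unfolding is_predual_def by blast
qed

lemma predual_eq:
  assumes "is_predual Q" "\<forall>\<phi>\<in>Q. blinfun_apply \<phi> x = blinfun_apply \<phi> y"
  shows "x = y"
proof -
  have "\<exists>!z. \<forall>\<phi>\<in>Q. blinfun_apply \<phi> x = blinfun_apply \<phi> z"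
    by (rule predual_rep[OF assms(1) blinfun.bounded_linear_left])
  then show ?thesis using assms(2) by auto
qed

lemma predual_subspace: "is_predual Q \<Longrightarrow> subspace Q"
  unfolding is_predual_def by simp

lemma wstar_cont:
  assumes "is_predual Q" "\<psi> \<in> Q"
  shows "continuous_map (wstar_top Q) euclidean (blinfun_apply \<psi>)"
  unfolding wstar_top_def
  by (rule initial_top_cont) (use assms subspace_0[OF predual_subspace[OF assms(1)]] in auto)

lemma wstar_topspace:
  assumes "is_predual Q"
  shows "topspace (wstar_top Q) = UNIV"
  unfolding wstar_top_def
  by (rule initial_top_topspace) (use subspace_0[OF predual_subspace[OF assms]] in auto)

lemma wstar_in_P:
  fixes P :: "('a::real_normed_vector \<Rightarrow>\<^sub>L real) set"
  assumes PP: "is_predual P" and cont: "continuous_map (wstar_top P) euclidean (blinfun_apply \<phi>)"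
  shows "\<phi> \<in> P"
proof -
  have sub: "subspace P" using PP by (rule predual_subspace)
  define W where "W = blinfun_apply \<phi> -` {-1<..<1}"
  have "openin (wstar_top P) {x \<in> topspace (wstar_top P). blinfun_apply \<phi> x \<in> {-1<..<1}}"
    using cont unfolding continuous_map_def by auto
  moreover have "{x \<in> topspace (wstar_top P). blinfun_apply \<phi> x \<in> {-1<..<1}} = W"
    unfolding W_def wstar_topspace[OF PP] by auto
  ultimately have "openin (wstar_top P) W" by simp
  then have gen: "generate_topology_on {\<phi> -` U | \<phi> U. \<phi> \<in> blinfun_apply ` P \<and> open U} W"
    unfolding wstar_top_def initial_top_def by (rule openin_topology_generated_by)
  have "0 \<in> W" unfolding W_def by simp
  from gen_nbhd[OF gen this] obtain M e where Me: "finite M" "M \<subseteq> P" "e > 0"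
    "{y. \<forall>p\<in>M. \<bar>blinfun_apply p y - blinfun_apply p 0\<bar> < e} \<subseteq> W" by blast
  have ker: "\<forall>y\<in>UNIV. (\<forall>p\<in>M. blinfun_apply p y = 0) \<longrightarrow> blinfun_apply \<phi> y = 0"
  proof (intro ballI impI)
    fix y assume y0: "\<forall>p\<in>M. blinfun_apply p y = 0"
    show "blinfun_apply \<phi> y = 0"
    proof (rule ccontr)
      assume ne: "blinfun_apply \<phi> y \<noteq> 0"
      define t where "t = 2 / \<bar>blinfun_apply \<phi> y\<bar>"
      have "\<forall>p\<in>M. \<bar>blinfun_apply p (t *\<^sub>R y) - blinfun_apply p 0\<bar> < e"
        using y0 Me(3) by (simp add: blinfun.scaleR_right)
      then have "t *\<^sub>R y \<in> W" using Me(4) by blast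
      then have "\<bar>t * blinfun_apply \<phi> y\<bar> < 1" unfolding W_def by (simp add: blinfun.scaleR_right abs_less_iff)
      moreover have "\<bar>t * blinfun_apply \<phi> y\<bar> = 2" unfolding t_def using ne by (simp add: abs_mult)
      ultimately show False by simp
    qed
  qed
  obtain c where c: "\<forall>y\<in>UNIV. blinfun_apply \<phi> y = (\<Sum>p\<in>M. c p * blinfun_apply p y)"
    using kernel_span[OF Me(1), of "blinfun_apply \<phi>"] ker
      bounded_linear.linear[OF blinfun.bounded_linear_right] subspace_UNIV by blast
  have "\<phi> = (\<Sum>p\<in>M. c p *\<^sub>R p)"
    by (rule blinfun_eqI) (simp add: c blinfun.sum_left blinfun.scaleR_left)
  also have "\<dots> \<in> P"
    using Me(2) by (intro subspace_sum[OF sub] subspace_scale[OF sub]) auto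
  finally show ?thesis .
qed


lemma ract_apply:
  "blinfun_apply (tdual_ract T a) b = blinfun_apply T (a * b)"
  unfolding tdual_ract_def
  by (simp add: bounded_linear_Blinfun_apply[OF bounded_linear_compose[OF blinfun.bounded_linear_right bounded_linear_mult_right]])

lemma lact_apply:
  "blinfun_apply (blinfun_apply (tdual_lact a T) b) c = blinfun_apply (blinfun_apply T b) (c * a)"
proof -
  have bb: "bounded_bilinear (\<lambda>b c. blinfun_apply (blinfun_apply T b) (c * a))"
    by (rule bounded_bilinear.comp[OF bounded_bilinear.comp1[OF bounded_bilinear_blinfun_apply blinfun.bounded_linear_right]
          bounded_linear_ident bounded_linear_mult_left])
  show ?thesis unfolding tdual_lact_def by (rule curry_bl(2)[OF bb])
qed

lemma pi_star_apply:
  "blinfun_apply (blinfun_apply (pi_star \<phi>) b) c = blinfun_apply \<phi> (b * c)"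
  unfolding pi_star_def by (rule curry_bl3(2)[OF bounded_bilinear_mult])

lemma pi_star_bl: "bounded_linear (pi_star :: ('a::{real_normed_algebra,banach} \<Rightarrow>\<^sub>L real) \<Rightarrow> _)"
proof -
  have "bounded_linear (\<lambda>\<phi>::'a \<Rightarrow>\<^sub>L real. Blinfun (\<lambda>b. Blinfun (\<lambda>c. blinfun_apply \<phi> (b * c))))"
    by (rule curry_bl3(1)[OF bounded_bilinear_mult])
  then show ?thesis unfolding pi_star_def[abs_def] .
qed

lemma diag_prop:
  assumes "is_predual P"
  shows "\<forall>\<phi>\<in>P. blinfun_apply \<phi> (diag_elem P m) = blinfun_apply m (pi_star \<phi>)"
proof -
  have "\<exists>!u. \<forall>\<phi>\<in>P. blinfun_apply m (pi_star \<phi>) = blinfun_apply \<phi> u"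
    by (rule predual_rep[OF assms bounded_linear_compose[OF blinfun.bounded_linear_right pi_star_bl]])
  then have "\<exists>!u. \<forall>\<phi>\<in>P. blinfun_apply \<phi> u = blinfun_apply m (pi_star \<phi>)"
    by (metis (no_types, lifting))
  then show ?thesis unfolding diag_elem_def by (rule theI')
qed

theorem lemma2p5:
  fixes P :: "('a::{real_normed_algebra,banach} \<Rightarrow>\<^sub>L real) set"
  assumes "dual_banach_algebra P"
    and "unital_algebra TYPE('a)"
    and "johnson_pseudo_connes_amenable P"
  shows "approx_connes_amenable_on P TYPE('e::banach)"
  unfolding approx_connes_amenable_on_def
proof (intro allI impI, elim conjE)
  fix l :: "'a \<Rightarrow> 'e \<Rightarrow> 'e" and r Q D
  assume ND: "normal_dual_bimodule P l r Q" and WD: "wstar_derivation P l r Q D"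
  have PP: "is_predual P" using assms(1) unfolding dual_banach_algebra_def by simp
  obtain e :: 'a where e: "\<And>a. e * a = a" "\<And>a. a * e = a"
    using assms(2) unfolding unital_algebra_def by blast
  obtain F :: "(('a \<Rightarrow>\<^sub>L 'a \<Rightarrow>\<^sub>L real) \<Rightarrow>\<^sub>L real) filter" where
    Fnb: "F \<noteq> bot" and
    Fev: "\<forall>\<^sub>F m in F. \<forall>a. \<forall>T\<in>sigma_wc P.
            blinfun_apply m (tdual_ract T a) = blinfun_apply m (tdual_lact a T)" and
    Flim: "\<And>a. ((\<lambda>m. diag_elem P m * a) \<longlongrightarrow> a) F"
    using assms(3) unfolding johnson_pseudo_connes_amenable_def by blast
  have lbb: "bounded_bilinear l" and rbb: "bounded_bilinear r"
    and lass: "\<And>a b x. l (a * b) x = l a (l b x)"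
    and rass: "\<And>a b x. r x (a * b) = r (r x a) b"
    and lr: "\<And>a b x. r (l a x) b = l a (r x b)"
    using ND unfolding normal_dual_bimodule_def banach_bimodule_def by auto
  have QQ: "is_predual Q" using ND unfolding normal_dual_bimodule_def by simp
  have Lmem: "\<And>\<psi> a. \<psi> \<in> Q \<Longrightarrow> Blinfun (\<lambda>x. blinfun_apply \<psi> (l a x)) \<in> Q"
    and Rmem: "\<And>\<psi> a. \<psi> \<in> Q \<Longrightarrow> Blinfun (\<lambda>x. blinfun_apply \<psi> (r x a)) \<in> Q"
    using ND unfolding normal_dual_bimodule_def by auto
  have lcont: "\<And>x. continuous_map (wstar_top P) (wstar_top Q) (\<lambda>a. l a x)"
    and rcont: "\<And>x. continuous_map (wstar_top P) (wstar_top Q) (\<lambda>a. r x a)"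
    using ND unfolding normal_dual_bimodule_def by auto
  have Dbl: "bounded_linear D" and Dder: "\<And>a b. D (a * b) = l a (D b) + r (D a) b"
    and Dcont: "continuous_map (wstar_top P) (wstar_top Q) D"
    using WD unfolding wstar_derivation_def by auto

  have Lap: "\<And>\<psi> a. blinfun_apply (Blinfun (\<lambda>x. blinfun_apply \<psi> (l a x))) = (\<lambda>x. blinfun_apply \<psi> (l a x))"
    by (rule bounded_linear_Blinfun_apply[OF bounded_linear_compose[OF blinfun.bounded_linear_right bounded_bilinear.bounded_linear_right[OF lbb]]])
  have Rap: "\<And>\<psi> a. blinfun_apply (Blinfun (\<lambda>x. blinfun_apply \<psi> (r x a))) = (\<lambda>x. blinfun_apply \<psi> (r x a))"
    by (rule bounded_linear_Blinfun_apply[OF bounded_linear_compose[OF blinfun.bounded_linear_right bounded_bilinear.bounded_linear_left[OF rbb]]])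
  define phia where "phia \<psi> a = Blinfun (\<lambda>d. blinfun_apply \<psi> (l d (D a)))" for \<psi> :: "'e \<Rightarrow>\<^sub>L real" and a
  have phiap: "\<And>\<psi> a. blinfun_apply (phia \<psi> a) = (\<lambda>d. blinfun_apply \<psi> (l d (D a)))"
    unfolding phia_def
    by (rule bounded_linear_Blinfun_apply[OF bounded_linear_compose[OF blinfun.bounded_linear_right bounded_bilinear.bounded_linear_left[OF lbb]]])

  have cQ: "\<And>\<psi>. \<psi> \<in> Q \<Longrightarrow> continuous_map (wstar_top Q) euclidean (blinfun_apply \<psi>)"
    by (rule wstar_cont[OF QQ])
  have cL: "\<And>\<psi> y. \<psi> \<in> Q \<Longrightarrow> continuous_map (wstar_top P) euclidean (\<lambda>a. blinfun_apply \<psi> (l a y))"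
    using continuous_map_compose[OF lcont cQ] by (simp add: o_def)
  have cR: "\<And>\<psi> y. \<psi> \<in> Q \<Longrightarrow> continuous_map (wstar_top P) euclidean (\<lambda>a. blinfun_apply \<psi> (r y a))"
    using continuous_map_compose[OF rcont cQ] by (simp add: o_def)
  have cD: "\<And>\<psi>. \<psi> \<in> Q \<Longrightarrow> continuous_map (wstar_top P) euclidean (\<lambda>a. blinfun_apply \<psi> (D a))"
    using continuous_map_compose[OF Dcont cQ] by (simp add: o_def)
  have phiaP: "\<And>\<psi> a. \<psi> \<in> Q \<Longrightarrow> phia \<psi> a \<in> P"
  proof -
    fix \<psi> a assume "\<psi> \<in> Q"
    then have "continuous_map (wstar_top P) euclidean (blinfun_apply (phia \<psi> a))"
      unfolding phiap by (rule cL)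
    then show "phia \<psi> a \<in> P" by (rule wstar_in_P[OF PP])
  qed

  have LDbb: "bounded_bilinear (\<lambda>b c. l b (D c))"
    by (rule bounded_bilinear.comp[OF lbb bounded_linear_ident Dbl])
  define Tm where "Tm \<psi> = Blinfun (\<lambda>b. Blinfun (\<lambda>c. blinfun_apply \<psi> (l b (D c))))" for \<psi> :: "'e \<Rightarrow>\<^sub>L real"
  have Tmbl: "bounded_linear Tm"
    unfolding Tm_def[abs_def] by (rule curry_bl3(1)[OF LDbb])
  have Tmap: "\<And>\<psi> b c. blinfun_apply (blinfun_apply (Tm \<psi>) b) c = blinfun_apply \<psi> (l b (D c))"
    unfolding Tm_def by (rule curry_bl3(2)[OF LDbb])

  have KR: "\<And>\<psi> a. Tm (Blinfun (\<lambda>x. blinfun_apply \<psi> (l a x))) = tdual_ract (Tm \<psi>) a"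
    by (intro blinfun_eqI) (simp add: Tmap Lap ract_apply lass)
  have KD: "\<And>\<psi> a. Tm (Blinfun (\<lambda>x. blinfun_apply \<psi> (r x a))) = tdual_lact a (Tm \<psi>) - pi_star (phia \<psi> a)"
    by (intro blinfun_eqI) (simp add: Tmap Rap lact_apply pi_star_apply phiap Dder
        bounded_bilinear.add_right[OF lbb] lass lr blinfun.add_right blinfun.diff_left)

  have sig: "\<And>\<psi>. \<psi> \<in> Q \<Longrightarrow> Tm \<psi> \<in> sigma_wc P"
  proof -
    fix \<psi> assume \<psi>: "\<psi> \<in> Q"
    have rep: "\<exists>y. \<forall>\<psi>\<in>Q. blinfun_apply \<Phi> (Tm \<psi>) = blinfun_apply \<psi> y" for \<Phi> :: "('a \<Rightarrow>\<^sub>L 'a \<Rightarrow>\<^sub>L real) \<Rightarrow>\<^sub>L real"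
      using predual_rep[OF QQ bounded_linear_compose[OF blinfun.bounded_linear_right Tmbl]] by blast
    have repP: "\<exists>d. \<forall>\<phi>\<in>P. blinfun_apply \<Phi> (pi_star \<phi>) = blinfun_apply \<phi> d" for \<Phi> :: "('a \<Rightarrow>\<^sub>L 'a \<Rightarrow>\<^sub>L real) \<Rightarrow>\<^sub>L real"
      using predual_rep[OF PP bounded_linear_compose[OF blinfun.bounded_linear_right pi_star_bl]] by blast
    have c1: "continuous_map (wstar_top P) weak_top (\<lambda>a. tdual_ract (Tm \<psi>) a)"
      unfolding weak_top_def
    proof (rule into_initial_top)
      fix g assume "g \<in> range (blinfun_apply :: ('a \<Rightarrow>\<^sub>L 'a \<Rightarrow>\<^sub>L real) \<Rightarrow>\<^sub>L real \<Rightarrow> _)"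
      then obtain \<Phi> where g: "g = blinfun_apply \<Phi>" by blast
      obtain y where y: "\<forall>\<psi>\<in>Q. blinfun_apply \<Phi> (Tm \<psi>) = blinfun_apply \<psi> y" using rep by blast
      have "\<And>a. g (tdual_ract (Tm \<psi>) a) = blinfun_apply \<psi> (l a y)"
        unfolding g KR[symmetric] using y Lmem[OF \<psi>] by (simp add: Lap)
      then show "continuous_map (wstar_top P) euclidean (\<lambda>a. g (tdual_ract (Tm \<psi>) a))"
        using cL[OF \<psi>] by simp
    qed simp
    have c2: "continuous_map (wstar_top P) weak_top (\<lambda>a. tdual_lact a (Tm \<psi>))"
      unfolding weak_top_def
    proof (rule into_initial_top)
      fix g assume "g \<in> range (blinfun_apply :: ('a \<Rightarrow>\<^sub>L 'a \<Rightarrow>\<^sub>L real) \<Rightarrow>\<^sub>L real \<Rightarrow> _)"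
      then obtain \<Phi> where g: "g = blinfun_apply \<Phi>" by blast
      obtain y where y: "\<forall>\<psi>\<in>Q. blinfun_apply \<Phi> (Tm \<psi>) = blinfun_apply \<psi> y" using rep by blast
      obtain d where d: "\<forall>\<phi>\<in>P. blinfun_apply \<Phi> (pi_star \<phi>) = blinfun_apply \<phi> d" using repP by blast
      have eq: "tdual_lact a (Tm \<psi>) = Tm (Blinfun (\<lambda>x. blinfun_apply \<psi> (r x a))) + pi_star (phia \<psi> a)" for a
        using KD[of \<psi> a] by simp
      have "g (tdual_lact a (Tm \<psi>)) = blinfun_apply \<psi> (r y a) + blinfun_apply (Blinfun (\<lambda>x. blinfun_apply \<psi> (l d x))) (D a)" for a
        unfolding g eq blinfun.add_right using y Rmem[OF \<psi>] d phiaP[OF \<psi>]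
        by (simp add: Rap Lap phiap)
      moreover have "continuous_map (wstar_top P) euclidean
          (\<lambda>a. blinfun_apply \<psi> (r y a) + blinfun_apply (Blinfun (\<lambda>x. blinfun_apply \<psi> (l d x))) (D a))"
        by (intro continuous_map_add cR[OF \<psi>] cD Lmem[OF \<psi>])
      ultimately show "continuous_map (wstar_top P) euclidean (\<lambda>a. g (tdual_lact a (Tm \<psi>)))"
        by simp
    qed simp
    show "Tm \<psi> \<in> sigma_wc P" unfolding sigma_wc_def using c1 c2 by simp
  qed

  define eta where "eta m = (THE x. \<forall>\<psi>\<in>Q. blinfun_apply \<psi> x = blinfun_apply m (Tm \<psi>))"
    for m :: "('a \<Rightarrow>\<^sub>L 'a \<Rightarrow>\<^sub>L real) \<Rightarrow>\<^sub>L real"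
  have etap: "\<forall>\<psi>\<in>Q. blinfun_apply \<psi> (eta m) = blinfun_apply m (Tm \<psi>)" for m
  proof -
    have "\<exists>!x. \<forall>\<psi>\<in>Q. blinfun_apply m (Tm \<psi>) = blinfun_apply \<psi> x"
      by (rule predual_rep[OF QQ bounded_linear_compose[OF blinfun.bounded_linear_right Tmbl]])
    then have "\<exists>!x. \<forall>\<psi>\<in>Q. blinfun_apply \<psi> x = blinfun_apply m (Tm \<psi>)"
      by (metis (no_types, lifting))
    then show ?thesis unfolding eta_def by (rule theI')
  qed

  have key: "\<forall>\<^sub>F m in F. \<forall>a. l a (eta m) - r (eta m) a = l (diag_elem P m) (D a)"
    using Fev
  proof (rule eventually_mono, intro allI)
    fix m :: "('a \<Rightarrow>\<^sub>L 'a \<Rightarrow>\<^sub>L real) \<Rightarrow>\<^sub>L real" and a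
    assume comm: "\<forall>a. \<forall>T\<in>sigma_wc P. blinfun_apply m (tdual_ract T a) = blinfun_apply m (tdual_lact a T)"
    show "l a (eta m) - r (eta m) a = l (diag_elem P m) (D a)"
    proof (rule predual_eq[OF QQ], intro ballI)
      fix \<psi> assume \<psi>: "\<psi> \<in> Q"
      have 1: "blinfun_apply \<psi> (l a (eta m)) = blinfun_apply m (tdual_ract (Tm \<psi>) a)"
        using etap[of m, rule_format, OF Lmem[OF \<psi>, of a]] by (simp only: Lap KR)
      have 2: "blinfun_apply \<psi> (r (eta m) a) = blinfun_apply m (tdual_lact a (Tm \<psi>)) - blinfun_apply m (pi_star (phia \<psi> a))"
        using etap[of m, rule_format, OF Rmem[OF \<psi>, of a]] by (simp only: Rap KD blinfun.diff_right)
      have 3: "blinfun_apply m (pi_star (phia \<psi> a)) = blinfun_apply \<psi> (l (diag_elem P m) (D a))"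
        using diag_prop[OF PP, of m, rule_format, OF phiaP[OF \<psi>, of a]] by (simp only: phiap)
      show "blinfun_apply \<psi> (l a (eta m) - r (eta m) a) = blinfun_apply \<psi> (l (diag_elem P m) (D a))"
        using 1 2 3 comm sig[OF \<psi>] by (simp add: blinfun.diff_right)
    qed
  qed

  define x0 where "x0 = D e"
  have x0: "x0 = l e x0 + r x0 e" using Dder[of e e] e unfolding x0_def by simp
  have z1: "r (l a x0) e = 0" for a
  proof -
    have "l a x0 = l a (l e x0) + l a (r x0 e)"
      using x0 bounded_bilinear.add_right[OF lbb] by metis
    also have "\<dots> = l a x0 + r (l a x0) e" by (simp add: lass[symmetric] e lr)
    finally show ?thesis by simp
  qed
  have z2: "l a (r x0 e) - r (r x0 e) a = - r x0 a" for a
    using z1[of a] by (simp add: lr[symmetric] rass[symmetric] e)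

  define xm where "xm m = eta m - r x0 e" for m
  show "approx_inner l r D"
    unfolding approx_inner_def
  proof (intro exI[of _ "filtermap xm F"] conjI allI)
    show "filtermap xm F \<noteq> bot" using Fnb by (simp add: filtermap_bot_iff)
    fix a
    have ev: "\<forall>\<^sub>F m in F. l (diag_elem P m) (D a) + r x0 a = l a (xm m) - r (xm m) a"
      using key
    proof (rule eventually_mono)
      fix m :: "('a \<Rightarrow>\<^sub>L 'a \<Rightarrow>\<^sub>L real) \<Rightarrow>\<^sub>L real" assume "\<forall>a. l a (eta m) - r (eta m) a = l (diag_elem P m) (D a)"
      then have h: "l a (eta m) - r (eta m) a = l (diag_elem P m) (D a)" by blast
      have "l a (xm m) - r (xm m) a = (l a (eta m) - r (eta m) a) - (l a (r x0 e) - r (r x0 e) a)"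
        unfolding xm_def by (simp add: bounded_bilinear.diff_right[OF lbb] bounded_bilinear.diff_left[OF rbb])
      then show "l (diag_elem P m) (D a) + r x0 a = l a (xm m) - r (xm m) a"
        using h z2[of a] by simp
    qed
    have dlim: "((\<lambda>m. diag_elem P m) \<longlongrightarrow> e) F"
      using Flim[of e] by (simp add: e)
    have "((\<lambda>m. l (diag_elem P m) (D a) + r x0 a) \<longlongrightarrow> l e (D a) + r x0 a) F"
      by (intro tendsto_add tendsto_const bounded_bilinear.tendsto[OF lbb] dlim)
    moreover have "l e (D a) + r x0 a = D a" using Dder[of e a] e unfolding x0_def by simp
    ultimately have "((\<lambda>m. l a (xm m) - r (xm m) a) \<longlongrightarrow> D a) F"
      using tendsto_cong[OF ev] by simp
    then show "((\<lambda>x. l a x - r x a) \<longlongrightarrow> D a) (filtermap xm F)"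
      by (simp add: filterlim_filtermap)
  qed
qed

end
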